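(* Let $\gamma$ be an absolute constant such that for every positive integer $k$ and every $0<q<1$, $Y\sim\mathrm{Bin}(k,q)$ satisfies $\sup_{i\ge 0}\bigl|\sqrt{\operatorname{Var}(Y)}\,\mathbb{P}(Y=i)-\frac{1}{\sqrt{2\pi}}e^{-(i-\mathbb{E}Y)^2/(2\operatorname{Var}(Y))}\bigr|<\gamma/\sqrt{\operatorname{Var}(Y)}$. Let $0<\varepsilon\le1$, $c=\sqrt{2\pi}\,\varepsilon/20$, let $\beta$ be a sufficiently large absolute constant, $\lambda=\max\{c^{-2},\beta^2\}$, and $d=np\ge\lambda n^{1/2}$. Let $v\in V_n$, let $\sigma_0\in\{-1,+1\}^{V_n}$ be any configuration with $\sum_{u\in V_n}\sigma_0(u)=\varphi(2c\sqrt n)$, and let $\Gamma\subseteq V_n\setminus\{v\}$ satisfy $\bigl||\Gamma|-d\bigr|\le d^{2/3}$. Then $$\operatorname{Var}\bigl(X_2(v)\mid S_0=\sigma_0,\ N(v)=\Gamma\bigr)\le\bigl(\max\{96\gamma^2,8\}+1\bigr)d,$$ where $X_2(v)=\sum_{u\in N(v)}\mathbf 1(S_1(u)=+1)$.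
   Context: $G(n,p)$ is the binomial random graph on $V_n=\{1,\dots,n\}$ and $N(v)$ denotes the neighbourhood of $v$ in it. Majority dynamics: $S_{t+1}(u)=\operatorname{sgn}(\sum_{w\in N(u)}S_t(w))$ if the sum is nonzero, else $S_{t+1}(u)=S_t(u)$. Here $S_0=\sigma_0$ denotes that the initial states are the fixed configuration $\sigma_0$; the randomness is that of the graph. $\varphi(x)=\min\{k\in\mathbb Z:k\ge x,\ k\equiv n\pmod 2\}$. *)

theory Defs
  imports "HOL-Analysis.Analysis" "HOL-Probability.Probability"
begin

text \<open>Vertex set V_n = {1..n}; a graph is a set of edges, each a 2-element subset of V_n.\<close>

definition vert :: "nat \<Rightarrow> nat set" where
  "vert n = {1..n}"

definition all_pairs :: "nat \<Rightarrow> nat set set" where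
  "all_pairs n = {e. e \<subseteq> vert n \<and> card e = 2}"

definition Gnp :: "nat \<Rightarrow> real \<Rightarrow> nat set set pmf" where
  "Gnp n p = map_pmf (\<lambda>f. {e \<in> all_pairs n. f e})
                     (Pi_pmf (all_pairs n) False (\<lambda>_. bernoulli_pmf p))"

definition nbhd :: "nat set set \<Rightarrow> nat \<Rightarrow> nat set" where
  "nbhd E u = {w. {u, w} \<in> E}"

definition maj_step :: "nat set set \<Rightarrow> (nat \<Rightarrow> int) \<Rightarrow> nat \<Rightarrow> int" where
  "maj_step E S u = (let s = (\<Sum>w\<in>nbhd E u. S w) in
                      if s > 0 then 1 else if s < 0 then -1 else S u)"

definition X2 :: "nat set set \<Rightarrow> (nat \<Rightarrow> int) \<Rightarrow> nat \<Rightarrow> nat" where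
  "X2 E \<sigma>0 v = card {u \<in> nbhd E v. maj_step E \<sigma>0 u = 1}"

definition phi :: "nat \<Rightarrow> real \<Rightarrow> int" where
  "phi n x = (LEAST k::int. real_of_int k \<ge> x \<and> k mod 2 = int n mod 2)"

end

theory Submission
  imports Defs
begin


lemma finite_set_Pi_bool:
  assumes "finite J"
  shows "finite (set_pmf (Pi_pmf J dflt (D :: 'a \<Rightarrow> bool pmf)))"
proof -
  have "set_pmf (Pi_pmf J dflt D) \<subseteq> PiE_dflt J dflt (set_pmf \<circ> D)"
    by (rule set_Pi_pmf_subset'[OF assms])
  moreover have "finite (PiE_dflt J dflt (set_pmf \<circ> D))"
    using assms by (intro finite_PiE_dflt) auto
  ultimately show ?thesis by (rule finite_subset)
qed

lemma expect_pair_prod: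
  fixes \<phi> :: "'a \<Rightarrow> real" and \<psi> :: "'b \<Rightarrow> real"
  assumes "finite (set_pmf A)" "finite (set_pmf B)"
  shows "measure_pmf.expectation (pair_pmf A B) (\<lambda>x. \<phi> (fst x) * \<psi> (snd x))
         = measure_pmf.expectation A \<phi> * measure_pmf.expectation B \<psi>"
proof -
  have "measure_pmf.expectation (pair_pmf A B) (\<lambda>x. \<phi> (fst x) * \<psi> (snd x))
      = (\<Sum>x\<in>set_pmf A \<times> set_pmf B. \<phi> (fst x) * \<psi> (snd x) * pmf (pair_pmf A B) x)"
    using assms by (intro integral_measure_pmf_real) auto
  also have "\<dots> = (\<Sum>(a,b)\<in>set_pmf A \<times> set_pmf B. (\<phi> a * pmf A a) * (\<psi> b * pmf B b))"
    by (rule sum.cong) (auto simp: pmf_pair)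
  also have "\<dots> = (\<Sum>a\<in>set_pmf A. \<Sum>b\<in>set_pmf B. (\<phi> a * pmf A a) * (\<psi> b * pmf B b))"
    by (simp add: sum.cartesian_product)
  also have "\<dots> = (\<Sum>a\<in>set_pmf A. \<phi> a * pmf A a) * (\<Sum>b\<in>set_pmf B. \<psi> b * pmf B b)"
    by (simp add: sum_product)
  also have "\<dots> = measure_pmf.expectation A \<phi> * measure_pmf.expectation B \<psi>"
    using assms by (simp add: integral_measure_pmf_real)
  finally show ?thesis .
qed

definition dep_on :: "'a set \<Rightarrow> (('a \<Rightarrow> bool) \<Rightarrow> 'c) \<Rightarrow> bool" where
  "dep_on S h \<longleftrightarrow> (\<forall>f g. (\<forall>x\<in>S. f x = g x) \<longrightarrow> h f = h g)"

lemma indep2: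
  fixes h1 h2 :: "('a \<Rightarrow> bool) \<Rightarrow> real"
  assumes J: "finite J" and S: "S \<subseteq> J" and ST: "S \<inter> T = {}"
    and d1: "dep_on S h1" and d2: "dep_on T h2"
  shows "measure_pmf.expectation (Pi_pmf J dflt D) (\<lambda>f. h1 f * h2 f)
       = measure_pmf.expectation (Pi_pmf J dflt D) h1 * measure_pmf.expectation (Pi_pmf J dflt D) h2"
proof -
  define m where "m = (\<lambda>(f::'a\<Rightarrow>bool,g::'a\<Rightarrow>bool) x. if x \<in> S then f x else g x)"
  define P where "P = pair_pmf (Pi_pmf S dflt D) (Pi_pmf (J - S) dflt D)"
  have JS: "J = S \<union> (J - S)" using S by auto
  have Q: "Pi_pmf J dflt D = map_pmf m P"
    unfolding m_def P_def using J S by (subst JS, intro Pi_pmf_union) (auto intro: finite_subset)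
  have fin1: "finite (set_pmf (Pi_pmf S dflt D))" using J S by (intro finite_set_Pi_bool) (auto intro: finite_subset)
  have fin2: "finite (set_pmf (Pi_pmf (J - S) dflt D))" using J by (intro finite_set_Pi_bool) auto
  have e1: "h1 (m x) = h1 (fst x)" for x
  proof -
    have "\<forall>y\<in>S. m x y = fst x y" by (cases x) (auto simp: m_def)
    then show ?thesis using d1 unfolding dep_on_def by blast
  qed
  have e2: "h2 (m x) = h2 (snd x)" for x
  proof -
    have "\<forall>y\<in>T. m x y = snd x y" using ST by (cases x) (auto simp: m_def)
    then show ?thesis using d2 unfolding dep_on_def by blast
  qed
  have "measure_pmf.expectation (Pi_pmf J dflt D) (\<lambda>f. h1 f * h2 f)
      = measure_pmf.expectation P (\<lambda>x. h1 (fst x) * h2 (snd x))"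
    by (simp add: Q e1 e2)
  also have "\<dots> = measure_pmf.expectation (Pi_pmf S dflt D) h1 * measure_pmf.expectation (Pi_pmf (J - S) dflt D) h2"
    unfolding P_def using fin1 fin2 by (rule expect_pair_prod)
  also have "measure_pmf.expectation (Pi_pmf S dflt D) h1 = measure_pmf.expectation (Pi_pmf J dflt D) h1"
    by (simp add: Q e1 P_def)
  also have "measure_pmf.expectation (Pi_pmf (J - S) dflt D) h2 = measure_pmf.expectation (Pi_pmf J dflt D) h2"
    by (simp add: Q e2 P_def)
  finally show ?thesis .
qed



lemma dep_on_mono: "dep_on A h \<Longrightarrow> A \<subseteq> B \<Longrightarrow> dep_on B h"
  unfolding dep_on_def by blast

lemma dep_on_op: "dep_on A h1 \<Longrightarrow> dep_on A h2 \<Longrightarrow> dep_on A (\<lambda>f. op (h1 f) (h2 f))"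
  unfolding dep_on_def by metis

lemma dep_on_coord: "e \<in> A \<Longrightarrow> dep_on A (\<lambda>f. \<phi> (f e))"
  unfolding dep_on_def by auto

lemma expect_coord:
  fixes \<phi> :: "bool \<Rightarrow> real"
  assumes "finite J" "e \<in> J" "D e = bernoulli_pmf p" "0 \<le> p" "p \<le> 1"
  shows "measure_pmf.expectation (Pi_pmf J dflt D) (\<lambda>f. \<phi> (f e)) = p * \<phi> True + (1 - p) * \<phi> False"
proof -
  have "measure_pmf.expectation (Pi_pmf J dflt D) (\<lambda>f. \<phi> (f e))
      = measure_pmf.expectation (map_pmf (\<lambda>f. f e) (Pi_pmf J dflt D)) \<phi>" by simp
  also have "map_pmf (\<lambda>f. f e) (Pi_pmf J dflt D) = bernoulli_pmf p"
    using assms by (subst Pi_pmf_component) auto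
  also have "measure_pmf.expectation (bernoulli_pmf p) \<phi> = (\<Sum>b\<in>UNIV. \<phi> b * pmf (bernoulli_pmf p) b)"
    by (rule integral_measure_pmf_real) auto
  also have "\<dots> = p * \<phi> True + (1 - p) * \<phi> False"
    using assms by (simp add: UNIV_bool)
  finally show ?thesis .
qed

lemma cov_lemma:
  fixes F G :: "bool \<Rightarrow> ('a \<Rightarrow> bool) \<Rightarrow> real"
  assumes J: "finite J" and eJ: "e \<in> J" and AJ: "A \<subseteq> J" and eA: "e \<notin> A" and eB: "e \<notin> B"
    and AB: "A \<inter> B = {}" and De: "D e = bernoulli_pmf p" and p0: "0 \<le> p" and p1: "p \<le> 1"
    and dF: "\<And>x. dep_on A (F x)" and dG: "\<And>x. dep_on B (G x)"
  shows "measure_pmf.expectation (Pi_pmf J dflt D) (\<lambda>f. F (f e) f * G (f e) f)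
         - measure_pmf.expectation (Pi_pmf J dflt D) (\<lambda>f. F (f e) f)
           * measure_pmf.expectation (Pi_pmf J dflt D) (\<lambda>f. G (f e) f)
       = p * (1 - p) * (measure_pmf.expectation (Pi_pmf J dflt D) (F True)
                        - measure_pmf.expectation (Pi_pmf J dflt D) (F False))
                     * (measure_pmf.expectation (Pi_pmf J dflt D) (G True)
                        - measure_pmf.expectation (Pi_pmf J dflt D) (G False))"
proof -
  define Q where "Q = Pi_pmf J dflt D"
  define E where "E = (\<lambda>h. measure_pmf.expectation Q (h :: ('a \<Rightarrow> bool) \<Rightarrow> real))"
  have fin: "finite (set_pmf Q)" unfolding Q_def using J by (rule finite_set_Pi_bool)
  have int: "integrable (measure_pmf Q) h" for h :: "('a \<Rightarrow> bool) \<Rightarrow> real"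
    using fin by (rule integrable_measure_pmf_finite)
  have Eadd: "E (\<lambda>f. h1 f + h2 f) = E h1 + E h2" for h1 h2
    unfolding E_def using int by (rule Bochner_Integration.integral_add) (rule int)
  have Ediff: "E (\<lambda>f. h1 f - h2 f) = E h1 - E h2" for h1 h2
    unfolding E_def using int by (rule Bochner_Integration.integral_diff) (rule int)
  define x where "x = (\<lambda>f::'a\<Rightarrow>bool. if f e then 1 else (0::real))"
  define a where "a = F False"
  define \<delta> where "\<delta> = (\<lambda>f. F True f - F False f)"
  define b where "b = G False"
  define \<eta> where "\<eta> = (\<lambda>f. G True f - G False f)"
  define k where "k = (\<lambda>f. a f * \<eta> f + \<delta> f * b f + \<delta> f * \<eta> f)"
  have dA: "dep_on A a" "dep_on A \<delta>" using dF unfolding a_def \<delta>_def by (auto intro: dep_on_op)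
  have dB: "dep_on B b" "dep_on B \<eta>" using dG unfolding b_def \<eta>_def by (auto intro: dep_on_op)
  have dAB: "dep_on (A \<union> B) k"
  proof -
    have 1: "dep_on (A \<union> B) a" "dep_on (A \<union> B) \<delta>" "dep_on (A \<union> B) b" "dep_on (A \<union> B) \<eta>"
      using dA dB by (auto intro: dep_on_mono)
    show ?thesis unfolding k_def
      by (intro dep_on_op[where op = "(+)"] dep_on_op[where op = "(*)"] 1)
  qed
  have dx: "dep_on {e} x" unfolding x_def by (rule dep_on_coord) simp
  have ind: "E (\<lambda>f. h1 f * h2 f) = E h1 * E h2" if "S \<subseteq> J" "S \<inter> T = {}" "dep_on S h1" "dep_on T h2" for S T h1 h2
    unfolding E_def Q_def using J that by (rule indep2)
  have Ex: "E x = p"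
    unfolding E_def Q_def x_def using J eJ De p0 p1 by (subst expect_coord) auto
  have F_eq: "(\<lambda>f. F (f e) f) = (\<lambda>f. a f + x f * \<delta> f)"
    by (auto simp: a_def x_def \<delta>_def)
  have G_eq: "(\<lambda>f. G (f e) f) = (\<lambda>f. b f + x f * \<eta> f)"
    by (auto simp: b_def x_def \<eta>_def)
  have FG_eq: "(\<lambda>f. F (f e) f * G (f e) f) = (\<lambda>f. a f * b f + x f * k f)"
    by (auto simp: a_def b_def k_def x_def \<delta>_def \<eta>_def algebra_simps)
  have eAB: "{e} \<inter> (A \<union> B) = {}" using eA eB by auto
  have eA': "{e} \<inter> A = {}" "{e} \<inter> B = {}" using eA eB by auto
  have "E (\<lambda>f. F (f e) f) = E a + p * E \<delta>"
    unfolding F_eq Eadd using ind[OF _ eA'(1) dx dA(2)] eJ Ex by simp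
  moreover have "E (\<lambda>f. G (f e) f) = E b + p * E \<eta>"
    unfolding G_eq Eadd using ind[OF _ eA'(2) dx dB(2)] eJ Ex by simp
  moreover have "E k = E a * E \<eta> + E \<delta> * E b + E \<delta> * E \<eta>"
    unfolding k_def Eadd using ind[OF AJ AB dA(1) dB(2)] ind[OF AJ AB dA(2) dB(1)] ind[OF AJ AB dA(2) dB(2)]
    by simp
  moreover have "E (\<lambda>f. F (f e) f * G (f e) f) = E a * E b + p * E k"
    unfolding FG_eq Eadd using ind[OF AJ AB dA(1) dB(1)] ind[OF _ eAB dx dAB] eJ Ex by simp
  moreover have "E (F True) - E (F False) = E \<delta>" unfolding \<delta>_def Ediff ..
  moreover have "E (G True) - E (G False) = E \<eta>" unfolding \<eta>_def Ediff ..
  ultimately show ?thesis unfolding E_def Q_def a_def b_def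
    by (simp add: algebra_simps)
qed



lemma binom_expect_Suc:
  fixes h :: "nat \<Rightarrow> real"
  assumes q: "0 \<le> q" "q \<le> 1"
  shows "measure_pmf.expectation (binomial_pmf (Suc n) q) h
       = (1 - q) * measure_pmf.expectation (binomial_pmf n q) h
         + q * measure_pmf.expectation (binomial_pmf n q) (\<lambda>k. h (Suc k))"
proof -
  have "binomial_pmf (Suc n) q = bernoulli_pmf q \<bind> (\<lambda>b. map_pmf (\<lambda>k. (if b then 1 else 0) + k) (binomial_pmf n q))"
    using q by (subst binomial_pmf_Suc) (auto simp: map_pmf_def)
  then have "measure_pmf.expectation (binomial_pmf (Suc n) q) h
      = (\<Sum>b\<in>UNIV. pmf (bernoulli_pmf q) b *\<^sub>R measure_pmf.expectation (map_pmf (\<lambda>k. (if b then 1 else 0) + k) (binomial_pmf n q)) h)"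
    using q by (simp only:) (rule pmf_expectation_bind, auto intro!: finite_imageI finite_set_pmf_binomial_pmf)
  also have "\<dots> = (1 - q) * measure_pmf.expectation (binomial_pmf n q) h
         + q * measure_pmf.expectation (binomial_pmf n q) (\<lambda>k. h (Suc k))"
    using q by (simp add: UNIV_bool)
  finally show ?thesis .
qed

lemma binom_mean: 
  assumes q: "0 \<le> q" "q \<le> 1"
  shows "measure_pmf.expectation (binomial_pmf n q) real = real n * q"
proof (induction n)
  case 0 then show ?case using q by (simp add: binomial_pmf_0)
next
  case (Suc n)
  have "measure_pmf.expectation (binomial_pmf n q) (\<lambda>k. real (Suc k)) = measure_pmf.expectation (binomial_pmf n q) real + 1"
    using q by (simp add: Bochner_Integration.integral_add)
  then show ?case using q Suc by (simp add: binom_expect_Suc algebra_simps)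
qed

lemma binom_second: 
  assumes q: "0 \<le> q" "q \<le> 1"
  shows "measure_pmf.expectation (binomial_pmf n q) (\<lambda>k. (real k)\<^sup>2) = real n * q * (1 - q) + (real n * q)\<^sup>2"
proof (induction n)
  case 0 then show ?case using q by (simp add: binomial_pmf_0)
next
  case (Suc n)
  have "measure_pmf.expectation (binomial_pmf n q) (\<lambda>k. (real (Suc k))\<^sup>2)
     = measure_pmf.expectation (binomial_pmf n q) (\<lambda>k. (real k)\<^sup>2 + 2 * real k + 1)"
    by (simp add: power2_eq_square algebra_simps)
  also have "\<dots> = measure_pmf.expectation (binomial_pmf n q) (\<lambda>k. (real k)\<^sup>2) + 2 * measure_pmf.expectation (binomial_pmf n q) real + 1"
    using q by (simp add: Bochner_Integration.integral_add)
  finally show ?case using q Suc binom_mean[OF q, of n] by (simp add: binom_expect_Suc algebra_simps power2_eq_square)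
qed

lemma binom_var:
  assumes q: "0 \<le> q" "q \<le> 1"
  shows "measure_pmf.variance (binomial_pmf n q) real = real n * q * (1 - q)"
proof -
  let ?m = "real n * q"
  have "measure_pmf.variance (binomial_pmf n q) real
      = measure_pmf.expectation (binomial_pmf n q) (\<lambda>k. (real k)\<^sup>2 + (- 2 * ?m) * real k + ?m\<^sup>2)"
    using q by (simp add: binom_mean power2_eq_square algebra_simps)
  also have "\<dots> = measure_pmf.expectation (binomial_pmf n q) (\<lambda>k. (real k)\<^sup>2) + (- 2 * ?m) * measure_pmf.expectation (binomial_pmf n q) real + ?m\<^sup>2"
    using q by (simp add: Bochner_Integration.integral_add)
  also have "\<dots> = real n * q * (1 - q)"
    using q by (simp add: binom_mean binom_second) (simp add: power2_eq_square algebra_simps)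
  finally show ?thesis .
qed



lemma pmf_bound_gamma:
  fixes \<gamma> :: real
  assumes gamma: "\<And>(k::nat) (q::real). k > 0 \<Longrightarrow> 0 < q \<Longrightarrow> q < 1 \<Longrightarrow>
     (let Y = binomial_pmf k q;
          V = measure_pmf.variance Y real;
          m = measure_pmf.expectation Y real
      in (SUP i::nat. \<bar>sqrt V * pmf Y i - 1 / sqrt (2 * pi) * exp (- (real i - m)\<^sup>2 / (2 * V))\<bar>)
           < \<gamma> / sqrt V)"
    and k: "k > 0" and q: "0 < q" "q < 1"
  shows "sqrt (real k * q * (1 - q)) * pmf (binomial_pmf k q) j < 1 / sqrt (2 * pi) + \<gamma> / sqrt (real k * q * (1 - q))"
    and "\<gamma> > 0"
proof -
  define V where "V = real k * q * (1 - q)"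
  define m where "m = real k * q"
  have V0: "V > 0" using k q unfolding V_def by auto
  define g where "g = (\<lambda>i::nat. \<bar>sqrt V * pmf (binomial_pmf k q) i - 1 / sqrt (2 * pi) * exp (- (real i - m)\<^sup>2 / (2 * V))\<bar>)"
  have Vv: "measure_pmf.expectation (binomial_pmf k q) (\<lambda>x. (real x - real k * q)\<^sup>2) = V"
    using binom_var[of q k] binom_mean[of q k] q unfolding V_def by simp
  have S: "(SUP i. g i) < \<gamma> / sqrt V"
    using gamma[OF k q] q unfolding g_def m_def Let_def by (simp only: binom_mean Vv)
  have ex1: "exp (- (real i - m)\<^sup>2 / (2 * V)) \<le> 1" for i
    using V0 by simp
  have c0: "0 < 1 / sqrt (2 * pi)" by simp
  have c1: "1 / sqrt (2 * pi) \<le> 1"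
  proof -
    have "1 \<le> sqrt (2 * pi)" using pi_gt3 by simp
    then show ?thesis by simp
  qed
  have bdd: "bdd_above (range g)"
  proof (rule bdd_aboveI2)
    fix i
    have "g i \<le> \<bar>sqrt V * pmf (binomial_pmf k q) i\<bar> + \<bar>1 / sqrt (2 * pi) * exp (- (real i - m)\<^sup>2 / (2 * V))\<bar>"
      unfolding g_def by (rule abs_triangle_ineq4)
    also have "\<dots> \<le> sqrt V * 1 + 1 * 1"
    proof (rule add_mono)
      show "\<bar>sqrt V * pmf (binomial_pmf k q) i\<bar> \<le> sqrt V * 1"
        using V0 pmf_le_1[of "binomial_pmf k q" i] by (simp add: abs_mult mult_left_le)
      have "1 / sqrt (2 * pi) * exp (- (real i - m)\<^sup>2 / (2 * V)) \<le> 1 * 1"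
        using c0 c1 ex1[of i] by (intro mult_mono) auto
      then show "\<bar>1 / sqrt (2 * pi) * exp (- (real i - m)\<^sup>2 / (2 * V))\<bar> \<le> 1 * 1"
        using c0 by (simp add: abs_mult)
    qed
    finally show "g i \<le> sqrt V + 1" by simp
  qed
  have gj: "g j < \<gamma> / sqrt V"
    using cSUP_upper[OF _ bdd, of j] S by auto
  have "sqrt V * pmf (binomial_pmf k q) j \<le> g j + 1 / sqrt (2 * pi) * exp (- (real j - m)\<^sup>2 / (2 * V))"
    unfolding g_def by linarith
  also have "\<dots> \<le> g j + 1 / sqrt (2 * pi)"
    using mult_left_mono[OF ex1[of j] less_imp_le[OF c0]] by simp
  finally show "sqrt (real k * q * (1 - q)) * pmf (binomial_pmf k q) j < 1 / sqrt (2 * pi) + \<gamma> / sqrt (real k * q * (1 - q))"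
    using gj unfolding V_def by linarith
  have "0 \<le> g j" unfolding g_def by simp
  then have "0 < \<gamma> / sqrt V" using gj by linarith
  then show "\<gamma> > 0" using V0 by (simp add: zero_less_divide_iff)
qed



definition graph :: "nat \<Rightarrow> (nat set \<Rightarrow> bool) \<Rightarrow> nat set set" where
  "graph n f = {e \<in> all_pairs n. f e}"

definition Dc :: "real \<Rightarrow> nat \<Rightarrow> nat set \<Rightarrow> nat set \<Rightarrow> bool pmf" where
  "Dc p v \<Gamma> e = (if v \<in> e then return_pmf (\<exists>u\<in>\<Gamma>. e = {v,u}) else bernoulli_pmf p)"

lemma finite_all_pairs: "finite (all_pairs n)"
proof -
  have "all_pairs n \<subseteq> Pow (vert n)" unfolding all_pairs_def by auto
  then show ?thesis by (rule finite_subset) (simp add: vert_def)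
qed

lemma pair_in_all_pairs: "{a,b} \<in> all_pairs n \<longleftrightarrow> a \<in> vert n \<and> b \<in> vert n \<and> a \<noteq> b"
  unfolding all_pairs_def by (cases "a = b") auto

lemma all_pairsE:
  assumes "e \<in> all_pairs n"
  obtains a b where "e = {a,b}" "a \<in> vert n" "b \<in> vert n" "a \<noteq> b"
  using assms unfolding all_pairs_def card_2_iff by auto

lemma nbhd_graph: "u \<in> vert n \<Longrightarrow> nbhd (graph n f) u = {z \<in> vert n - {u}. f {u,z}}"
  unfolding nbhd_def graph_def by (auto simp: pair_in_all_pairs)

lemma doubleton_v: "w \<noteq> v \<Longrightarrow> u \<noteq> v \<Longrightarrow> ({v,w} = {v,u}) \<longleftrightarrow> w = u"
  by (auto simp: doubleton_eq_iff)

lemma nbhd_char: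
  assumes v: "v \<in> vert n" and G: "\<Gamma> \<subseteq> vert n - {v}"
  shows "nbhd (graph n f) v = \<Gamma> \<longleftrightarrow> (\<forall>e\<in>all_pairs n. v \<in> e \<longrightarrow> f e = (\<exists>u\<in>\<Gamma>. e = {v,u}))"
proof
  assume N: "nbhd (graph n f) v = \<Gamma>"
  show "\<forall>e\<in>all_pairs n. v \<in> e \<longrightarrow> f e = (\<exists>u\<in>\<Gamma>. e = {v,u})"
  proof (intro ballI impI)
    fix e assume e: "e \<in> all_pairs n" "v \<in> e"
    then obtain w where w: "e = {v,w}" "w \<in> vert n" "w \<noteq> v"
      by (elim all_pairsE) (auto simp: insert_commute)
    have "f e \<longleftrightarrow> w \<in> nbhd (graph n f) v" using w v by (simp add: nbhd_graph)
    also have "\<dots> \<longleftrightarrow> w \<in> \<Gamma>" using N by simp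
    also have "\<dots> \<longleftrightarrow> (\<exists>u\<in>\<Gamma>. e = {v,u})" using w G doubleton_v[of w v] by auto
    finally show "f e = (\<exists>u\<in>\<Gamma>. e = {v,u})" .
  qed
next
  assume H: "\<forall>e\<in>all_pairs n. v \<in> e \<longrightarrow> f e = (\<exists>u\<in>\<Gamma>. e = {v,u})"
  show "nbhd (graph n f) v = \<Gamma>"
  proof (rule set_eqI)
    fix z
    show "z \<in> nbhd (graph n f) v \<longleftrightarrow> z \<in> \<Gamma>"
    proof (cases "z \<in> vert n - {v}")
      case True
      then have "{v,z} \<in> all_pairs n" using v by (auto simp: pair_in_all_pairs)
      then have "f {v,z} = (\<exists>u\<in>\<Gamma>. {v,z} = {v,u})" using H by auto
      also have "\<dots> = (z \<in> \<Gamma>)" using True G doubleton_v[of z v] by auto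
      finally show ?thesis using v True by (simp add: nbhd_graph)
    next
      case False
      then show ?thesis using v G by (auto simp: nbhd_graph)
    qed
  qed
qed

lemma cond_eq:
  assumes v: "v \<in> vert n" and G: "\<Gamma> \<subseteq> vert n - {v}" and p: "0 \<le> p" "p \<le> 1"
    and ne: "set_pmf (Gnp n p) \<inter> {E. nbhd E v = \<Gamma>} \<noteq> {}"
  shows "cond_pmf (Gnp n p) {E. nbhd E v = \<Gamma>} = map_pmf (graph n) (Pi_pmf (all_pairs n) False (Dc p v \<Gamma>))"
proof -
  define J where "J = all_pairs n"
  define P0 where "P0 = Pi_pmf J False (\<lambda>_. bernoulli_pmf p)"
  define X where "X = graph n -` {E. nbhd E v = \<Gamma>}"
  define t where "t = (\<lambda>e. \<exists>u\<in>\<Gamma>. e = {v,u})"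
  define B where "B = (\<lambda>e. if v \<in> e then {t e} else (UNIV :: bool set))"
  have finJ: "finite J" unfolding J_def by (rule finite_all_pairs)
  have Gnp: "Gnp n p = map_pmf (graph n) P0"
    unfolding Gnp_def P0_def J_def graph_def[abs_def] by simp
  have ne': "set_pmf P0 \<inter> X \<noteq> {}" using ne unfolding Gnp X_def by auto
  have Xc: "f \<in> X \<longleftrightarrow> (\<forall>e\<in>J. v \<in> e \<longrightarrow> f e = t e)" for f
    unfolding X_def J_def t_def using nbhd_char[OF v G] by simp
  have pmfP0: "pmf P0 f = (if (\<forall>x. x \<notin> J \<longrightarrow> f x = False) then \<Prod>e\<in>J. pmf (bernoulli_pmf p) (f e) else 0)" for f
    unfolding P0_def using finJ by (rule pmf_Pi)
  have pmfQ: "pmf (Pi_pmf J False (Dc p v \<Gamma>)) f = (if (\<forall>x. x \<notin> J \<longrightarrow> f x = False) then \<Prod>e\<in>J. pmf (Dc p v \<Gamma> e) (f e) else 0)" for f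
    using finJ by (rule pmf_Pi)
  have mX: "measure P0 X = measure P0 (PiE_dflt J False B)"
  proof (rule measure_prob_cong_0)
    fix f assume "f \<in> X - PiE_dflt J False B"
    then have "\<not> (\<forall>x. x \<notin> J \<longrightarrow> f x = False)" using Xc[of f] by (auto simp: PiE_dflt_def B_def split: if_splits)
    then show "pmf P0 f = 0" using pmfP0[of f] by auto
  next
    fix f assume "f \<in> PiE_dflt J False B - X"
    then have False using Xc[of f] by (auto simp: PiE_dflt_def B_def split: if_splits)
    then show "pmf P0 f = 0" ..
  qed
  also have "\<dots> = (\<Prod>e\<in>J. measure_pmf.prob (bernoulli_pmf p) (B e))"
    unfolding P0_def using finJ by (rule measure_Pi_pmf_PiE_dflt)
  finally have mX': "measure P0 X = (\<Prod>e\<in>J. measure_pmf.prob (bernoulli_pmf p) (B e))" .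
  have mX0: "measure P0 X \<noteq> 0" using ne' by (rule measure_measure_pmf_not_zero)
  have key: "pmf (bernoulli_pmf p) (f e) = measure_pmf.prob (bernoulli_pmf p) (B e) * pmf (Dc p v \<Gamma> e) (f e)"
    if "f \<in> X" "e \<in> J" for f e
  proof (cases "v \<in> e")
    case True
    then have "f e = t e" using that Xc by auto
    then show ?thesis using True by (simp add: B_def Dc_def t_def measure_pmf_single)
  next
    case False
    then show ?thesis by (simp add: B_def Dc_def)
  qed
  have "cond_pmf P0 X = Pi_pmf J False (Dc p v \<Gamma>)"
  proof (rule pmf_eqI)
    fix f
    show "pmf (cond_pmf P0 X) f = pmf (Pi_pmf J False (Dc p v \<Gamma>)) f"
    proof (cases "f \<in> X")
      case True
      show ?thesis
      proof (cases "\<forall>x. x \<notin> J \<longrightarrow> f x = False")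
        case out: True
        have "pmf P0 f = (\<Prod>e\<in>J. measure_pmf.prob (bernoulli_pmf p) (B e) * pmf (Dc p v \<Gamma> e) (f e))"
          using out key[OF True] by (simp add: pmfP0)
        also have "\<dots> = measure P0 X * pmf (Pi_pmf J False (Dc p v \<Gamma>)) f"
          using out by (simp add: prod.distrib mX' pmfQ)
        finally show ?thesis using True mX0 by (simp add: pmf_cond[OF ne'])
      next
        case False
        then show ?thesis using True by (auto simp: pmf_cond[OF ne'] pmfP0 pmfQ)
      qed
    next
      case False
      have "pmf (Pi_pmf J False (Dc p v \<Gamma>)) f = 0"
      proof (cases "\<forall>x. x \<notin> J \<longrightarrow> f x = False")
        case True
        from False obtain e where e: "e \<in> J" "v \<in> e" "f e \<noteq> t e" using Xc by auto
        then have "pmf (Dc p v \<Gamma> e) (f e) = 0" by (auto simp: Dc_def t_def)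
        then have "(\<Prod>e\<in>J. pmf (Dc p v \<Gamma> e) (f e)) = 0" using e finJ by (metis prod_zero_iff)
        then show ?thesis using True by (simp add: pmfQ)
      qed (auto simp: pmfQ)
      then show ?thesis using False by (simp add: pmf_cond[OF ne'])
    qed
  qed
  then show ?thesis unfolding Gnp X_def using ne' unfolding X_def by (simp add: cond_map_pmf J_def)
qed



lemma expect_cong_supp:
  fixes X Y :: "'a \<Rightarrow> real"
  assumes "\<And>x. x \<in> set_pmf M \<Longrightarrow> X x = Y x"
  shows "measure_pmf.expectation M X = measure_pmf.expectation M Y"
  using assms by (intro integral_cong_AE) (auto intro!: AE_pmfI)

lemma variance_cong_supp:
  fixes X Y :: "'a \<Rightarrow> real"
  assumes "\<And>x. x \<in> set_pmf M \<Longrightarrow> X x = Y x"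
  shows "measure_pmf.variance M X = measure_pmf.variance M Y"
proof -
  have "measure_pmf.expectation M X = measure_pmf.expectation M Y" using assms by (rule expect_cong_supp)
  then show ?thesis using assms by (intro expect_cong_supp) auto
qed

lemma cov_expand:
  fixes a b :: "'a \<Rightarrow> real"
  assumes fin: "finite (set_pmf M)"
  shows "measure_pmf.expectation M (\<lambda>x. (a x - ca) * (b x - cb))
       = measure_pmf.expectation M (\<lambda>x. a x * b x) - cb * measure_pmf.expectation M a
         - ca * measure_pmf.expectation M b + ca * cb"
proof -
  have int: "integrable M h" for h :: "'a \<Rightarrow> real" using fin by (rule integrable_measure_pmf_finite)
  have "(\<lambda>x. (a x - ca) * (b x - cb)) = (\<lambda>x. (a x * b x - cb * a x) - (ca * b x - ca * cb))"
    by (auto simp: algebra_simps)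
  then show ?thesis using int
    by (simp add: Bochner_Integration.integral_diff[OF int int] algebra_simps)
qed

lemma var_sum:
  fixes h :: "'i \<Rightarrow> 'a \<Rightarrow> real"
  assumes fin: "finite (set_pmf M)" and S: "finite S"
  shows "measure_pmf.variance M (\<lambda>x. \<Sum>i\<in>S. h i x)
       = (\<Sum>i\<in>S. \<Sum>j\<in>S. measure_pmf.expectation M (\<lambda>x. h i x * h j x)
             - measure_pmf.expectation M (h i) * measure_pmf.expectation M (h j))"
proof -
  have int: "integrable M g" for g :: "'a \<Rightarrow> real" using fin by (rule integrable_measure_pmf_finite)
  define c where "c = (\<lambda>i. measure_pmf.expectation M (h i))"
  have E: "measure_pmf.expectation M (\<lambda>x. \<Sum>i\<in>S. h i x) = (\<Sum>i\<in>S. c i)"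
    unfolding c_def using int by (rule Bochner_Integration.integral_sum)
  have sq: "((\<Sum>i\<in>S. h i x) - (\<Sum>i\<in>S. c i))\<^sup>2 = (\<Sum>i\<in>S. \<Sum>j\<in>S. (h i x - c i) * (h j x - c j))" for x
    by (simp add: power2_eq_square sum_subtractf[symmetric] sum_product)
  have "measure_pmf.variance M (\<lambda>x. \<Sum>i\<in>S. h i x)
      = measure_pmf.expectation M (\<lambda>x. \<Sum>i\<in>S. \<Sum>j\<in>S. (h i x - c i) * (h j x - c j))"
    by (simp only: E sq)
  also have "\<dots> = (\<Sum>i\<in>S. \<Sum>j\<in>S. measure_pmf.expectation M (\<lambda>x. (h i x - c i) * (h j x - c j)))"
    using int by (simp add: Bochner_Integration.integral_sum)
  also have "\<dots> = (\<Sum>i\<in>S. \<Sum>j\<in>S. measure_pmf.expectation M (\<lambda>x. h i x * h j x) - c i * c j)"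
    by (intro sum.cong refl) (subst cov_expand[OF fin], simp add: c_def)
  finally show ?thesis unfolding c_def .
qed



definition Tf :: "int \<Rightarrow> bool \<Rightarrow> real" where
  "Tf s b = (if s > 0 \<or> (s = 0 \<and> b) then 1 else 0)"

definition Iu :: "nat \<Rightarrow> (nat \<Rightarrow> int) \<Rightarrow> nat \<Rightarrow> (nat set \<Rightarrow> bool) \<Rightarrow> real" where
  "Iu n \<sigma>0 u f = (if maj_step (graph n f) \<sigma>0 u = 1 then 1 else 0)"

definition Rs :: "nat set \<Rightarrow> (nat \<Rightarrow> int) \<Rightarrow> nat \<Rightarrow> (nat set \<Rightarrow> bool) \<Rightarrow> int" where
  "Rs W \<sigma>0 u f = (\<Sum>z\<in>W. if f {u,z} then \<sigma>0 z else 0)"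

definition Fu :: "nat \<Rightarrow> nat \<Rightarrow> (nat \<Rightarrow> int) \<Rightarrow> nat \<Rightarrow> nat \<Rightarrow> bool \<Rightarrow> (nat set \<Rightarrow> bool) \<Rightarrow> real" where
  "Fu n v \<sigma>0 u w x f = Tf (\<sigma>0 v + (if x then \<sigma>0 w else 0) + Rs (vert n - {u,v,w}) \<sigma>0 u f) (\<sigma>0 u = 1)"

lemma supp_Q:
  assumes "f \<in> set_pmf (Pi_pmf (all_pairs n) False (Dc p v \<Gamma>))"
  shows "\<forall>x. x \<notin> all_pairs n \<longrightarrow> f x = False"
    and "\<forall>e\<in>all_pairs n. v \<in> e \<longrightarrow> f e = (\<exists>u\<in>\<Gamma>. e = {v,u})"
proof -
  have "f \<in> PiE_dflt (all_pairs n) False (set_pmf \<circ> Dc p v \<Gamma>)"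
    using subsetD[OF set_Pi_pmf_subset'[OF finite_all_pairs[of n]] assms] .
  then have H: "\<forall>x. (x \<in> all_pairs n \<longrightarrow> f x \<in> set_pmf (Dc p v \<Gamma> x)) \<and> (x \<notin> all_pairs n \<longrightarrow> f x = False)"
    by (auto simp: PiE_dflt_def)
  then show "\<forall>x. x \<notin> all_pairs n \<longrightarrow> f x = False" by blast
  show "\<forall>e\<in>all_pairs n. v \<in> e \<longrightarrow> f e = (\<exists>u\<in>\<Gamma>. e = {v,u})"
  proof (intro ballI impI)
    fix e assume e: "e \<in> all_pairs n" "v \<in> e"
    have "f e \<in> set_pmf (Dc p v \<Gamma> e)" using H e by blast
    moreover have "Dc p v \<Gamma> e = return_pmf (\<exists>u\<in>\<Gamma>. e = {v,u})" using e by (simp add: Dc_def)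
    ultimately show "f e = (\<exists>u\<in>\<Gamma>. e = {v,u})" by (simp only: set_return_pmf) blast
  qed
qed

lemma nbhd_supp:
  assumes v: "v \<in> vert n" and G: "\<Gamma> \<subseteq> vert n - {v}"
    and f: "f \<in> set_pmf (Pi_pmf (all_pairs n) False (Dc p v \<Gamma>))"
  shows "nbhd (graph n f) v = \<Gamma>"
  using nbhd_char[OF v G] supp_Q(2)[OF f] by blast

lemma X2_supp:
  assumes v: "v \<in> vert n" and G: "\<Gamma> \<subseteq> vert n - {v}"
    and f: "f \<in> set_pmf (Pi_pmf (all_pairs n) False (Dc p v \<Gamma>))"
  shows "real (X2 (graph n f) \<sigma>0 v) = (\<Sum>u\<in>\<Gamma>. Iu n \<sigma>0 u f)"
proof -
  have fin: "finite \<Gamma>" using G finite_subset[of \<Gamma> "vert n"] by (auto simp: vert_def)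
  have "X2 (graph n f) \<sigma>0 v = card {u \<in> \<Gamma>. maj_step (graph n f) \<sigma>0 u = 1}"
    unfolding X2_def nbhd_supp[OF v G f] ..
  also have "{u \<in> \<Gamma>. maj_step (graph n f) \<sigma>0 u = 1} = \<Gamma> \<inter> {u. maj_step (graph n f) \<sigma>0 u = 1}" by auto
  finally show ?thesis using fin by (simp add: Iu_def sum.If_cases)
qed

lemma I_eq:
  assumes v: "v \<in> vert n" and G: "\<Gamma> \<subseteq> vert n - {v}"
    and f: "f \<in> set_pmf (Pi_pmf (all_pairs n) False (Dc p v \<Gamma>))"
    and u: "u \<in> \<Gamma>" and w: "w \<in> \<Gamma>" and uw: "u \<noteq> w"
  shows "Iu n \<sigma>0 u f = Fu n v \<sigma>0 u w (f {u,w}) f"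
proof -
  have uV: "u \<in> vert n" "u \<noteq> v" and wV: "w \<in> vert n" "w \<noteq> v" using u w G by auto
  have finV: "finite (vert n)" by (simp add: vert_def)
  have fuv: "f {u,v}"
  proof -
    have "{u,v} \<in> all_pairs n" using uV v by (auto simp: pair_in_all_pairs)
    then have "f {u,v} = (\<exists>u'\<in>\<Gamma>. {u,v} = {v,u'})" using supp_Q(2)[OF f] by auto
    then show ?thesis using u by (auto simp: insert_commute)
  qed
  define W where "W = vert n - {u,v,w}"
  have split: "vert n - {u} = insert v (insert w W)" using v wV uV uw unfolding W_def by auto
  have "(\<Sum>z\<in>nbhd (graph n f) u. \<sigma>0 z) = (\<Sum>z\<in>vert n - {u}. if f {u,z} then \<sigma>0 z else 0)"
    unfolding nbhd_graph[OF uV(1)] by (rule sum.inter_filter) (simp add: finV)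
  also have "\<dots> = \<sigma>0 v + (if f {u,w} then \<sigma>0 w else 0) + Rs W \<sigma>0 u f"
    unfolding split Rs_def using finV wV uw fuv by (simp add: W_def)
  finally have s: "(\<Sum>z\<in>nbhd (graph n f) u. \<sigma>0 z) = \<sigma>0 v + (if f {u,w} then \<sigma>0 w else 0) + Rs W \<sigma>0 u f" .
  show ?thesis
    unfolding Iu_def Fu_def maj_step_def Let_def s W_def[symmetric] Tf_def by auto
qed



lemma expect_diff_bound:
  fixes F1 F0 g :: "'a \<Rightarrow> real"
  assumes fin: "finite (set_pmf M)" and b: "\<And>x. \<bar>F1 x - F0 x\<bar> \<le> g x"
  shows "\<bar>measure_pmf.expectation M F1 - measure_pmf.expectation M F0\<bar> \<le> measure_pmf.expectation M g"
proof -
  have int: "integrable M h" for h :: "'a \<Rightarrow> real" using fin by (rule integrable_measure_pmf_finite)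
  have "measure_pmf.expectation M F1 - measure_pmf.expectation M F0 = measure_pmf.expectation M (\<lambda>x. F1 x - F0 x)"
    by (rule Bochner_Integration.integral_diff[symmetric]) (rule int)+
  also have "\<bar>\<dots>\<bar> \<le> measure_pmf.expectation M (\<lambda>x. \<bar>F1 x - F0 x\<bar>)" by (rule integral_abs_bound)
  also have "\<dots> \<le> measure_pmf.expectation M g" by (rule integral_mono[OF int int b])
  finally show ?thesis .
qed

lemma Tf_diff:
  assumes "\<sigma> = 1 \<or> \<sigma> = -1"
  shows "\<bar>Tf (s + \<sigma>) b - Tf s b\<bar> \<le> (if s = 0 then 1 else 0) + (if s = - \<sigma> then 1 else 0)"
  using assms unfolding Tf_def by auto

lemma Tf_diff1: "\<bar>Tf s b - Tf s' b'\<bar> \<le> 1"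
  unfolding Tf_def by auto

lemma Tf_01: "0 \<le> Tf s b" "Tf s b \<le> 1"
  unfolding Tf_def by auto

lemma dep_on_Fu:
  "dep_on ((\<lambda>z. {u,z}) ` (vert n - {u,v,w})) (Fu n v \<sigma>0 u w x)"
  unfolding dep_on_def Fu_def Rs_def
proof (intro allI impI)
  fix f g :: "nat set \<Rightarrow> bool"
  assume "\<forall>y\<in>(\<lambda>z. {u,z}) ` (vert n - {u,v,w}). f y = g y"
  then have "(\<Sum>z\<in>vert n - {u,v,w}. if f {u,z} then \<sigma>0 z else 0) = (\<Sum>z\<in>vert n - {u,v,w}. if g {u,z} then \<sigma>0 z else 0)"
    by (intro sum.cong) auto
  then show "Tf (\<sigma>0 v + (if x then \<sigma>0 w else 0) + (\<Sum>z\<in>vert n - {u,v,w}. if f {u,z} then \<sigma>0 z else 0)) (\<sigma>0 u = 1) =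
             Tf (\<sigma>0 v + (if x then \<sigma>0 w else 0) + (\<Sum>z\<in>vert n - {u,v,w}. if g {u,z} then \<sigma>0 z else 0)) (\<sigma>0 u = 1)"
    by simp
qed

lemma cov_off:
  assumes v: "v \<in> vert n" and G: "\<Gamma> \<subseteq> vert n - {v}" and p: "0 \<le> p" "p \<le> 1"
    and u: "u \<in> \<Gamma>" and w: "w \<in> \<Gamma>" and uw: "u \<noteq> w"
  defines "Q \<equiv> Pi_pmf (all_pairs n) False (Dc p v \<Gamma>)"
  shows "measure_pmf.expectation Q (\<lambda>f. Iu n \<sigma>0 u f * Iu n \<sigma>0 w f)
         - measure_pmf.expectation Q (Iu n \<sigma>0 u) * measure_pmf.expectation Q (Iu n \<sigma>0 w)
       = p * (1 - p) * (measure_pmf.expectation Q (Fu n v \<sigma>0 u w True) - measure_pmf.expectation Q (Fu n v \<sigma>0 u w False))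
                     * (measure_pmf.expectation Q (Fu n v \<sigma>0 w u True) - measure_pmf.expectation Q (Fu n v \<sigma>0 w u False))"
proof -
  have uV: "u \<in> vert n" "u \<noteq> v" and wV: "w \<in> vert n" "w \<noteq> v" using u w G by auto
  define e where "e = {u,w}"
  define W where "W = vert n - {u,v,w}"
  have W': "vert n - {w,v,u} = W" unfolding W_def by auto
  define A where "A = (\<lambda>z. {u,z}) ` W"
  define B where "B = (\<lambda>z. {w,z}) ` W"
  have ewu: "{w,u} = e" unfolding e_def by (simp add: insert_commute)
  have I1: "Iu n \<sigma>0 u f = Fu n v \<sigma>0 u w (f e) f" if "f \<in> set_pmf Q" for f
    using I_eq[OF v G _ u w uw] that unfolding Q_def e_def by blast
  have I2: "Iu n \<sigma>0 w f = Fu n v \<sigma>0 w u (f e) f" if "f \<in> set_pmf Q" for f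
    using I_eq[OF v G _ w u uw[symmetric]] that unfolding Q_def ewu by blast
  have eJ: "e \<in> all_pairs n" unfolding e_def using uV wV uw by (simp add: pair_in_all_pairs)
  have AJ: "A \<subseteq> all_pairs n" unfolding A_def W_def using uV by (auto simp: pair_in_all_pairs)
  have eA: "e \<notin> A" unfolding A_def e_def W_def by (auto simp: doubleton_eq_iff)
  have eB: "e \<notin> B" unfolding B_def e_def W_def by (auto simp: doubleton_eq_iff)
  have AB: "A \<inter> B = {}" unfolding A_def B_def W_def using uw by (auto simp: doubleton_eq_iff)
  have De: "Dc p v \<Gamma> e = bernoulli_pmf p" unfolding Dc_def e_def using uV wV by auto
  have dF: "dep_on A (Fu n v \<sigma>0 u w x)" for x unfolding A_def W_def by (rule dep_on_Fu)
  have dG: "dep_on B (Fu n v \<sigma>0 w u x)" for x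
    using dep_on_Fu[of w n v u \<sigma>0 x] unfolding B_def W' .
  have "measure_pmf.expectation Q (\<lambda>f. Iu n \<sigma>0 u f * Iu n \<sigma>0 w f) = measure_pmf.expectation Q (\<lambda>f. Fu n v \<sigma>0 u w (f e) f * Fu n v \<sigma>0 w u (f e) f)"
    by (rule expect_cong_supp) (simp add: I1 I2)
  moreover have "measure_pmf.expectation Q (Iu n \<sigma>0 u) = measure_pmf.expectation Q (\<lambda>f. Fu n v \<sigma>0 u w (f e) f)"
    by (rule expect_cong_supp) (simp add: I1)
  moreover have "measure_pmf.expectation Q (Iu n \<sigma>0 w) = measure_pmf.expectation Q (\<lambda>f. Fu n v \<sigma>0 w u (f e) f)"
    by (rule expect_cong_supp) (simp add: I2)
  ultimately show ?thesis
    unfolding Q_def using cov_lemma[where F = "Fu n v \<sigma>0 u w" and G = "Fu n v \<sigma>0 w u" and D = "Dc p v \<Gamma>" and e = e and A = A and B = B and p = p and J = "all_pairs n", OF finite_all_pairs[of n] eJ AJ eA eB AB De p dF dG] by simp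
qed

lemma delta_bound:
  fixes p :: real
  assumes v: "v \<in> vert n" and G: "\<Gamma> \<subseteq> vert n - {v}"
    and u: "u \<in> \<Gamma>" and w: "w \<in> \<Gamma>" and sw: "\<sigma>0 w = 1 \<or> \<sigma>0 w = -1"
  defines "Q \<equiv> Pi_pmf (all_pairs n) False (Dc p v \<Gamma>)"
  defines "R \<equiv> Rs (vert n - {u,v,w}) \<sigma>0 u"
  shows "\<bar>measure_pmf.expectation Q (Fu n v \<sigma>0 u w True) - measure_pmf.expectation Q (Fu n v \<sigma>0 u w False)\<bar>
         \<le> measure_pmf.expectation Q (\<lambda>f. if R f = - \<sigma>0 v then 1 else 0)
           + measure_pmf.expectation Q (\<lambda>f. if R f = - \<sigma>0 v - \<sigma>0 w then 1 else 0)"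
    and "\<bar>measure_pmf.expectation Q (Fu n v \<sigma>0 u w True) - measure_pmf.expectation Q (Fu n v \<sigma>0 u w False)\<bar> \<le> 1"
proof -
  have fin: "finite (set_pmf Q)" unfolding Q_def by (rule finite_set_Pi_bool[OF finite_all_pairs])
  have int: "integrable Q h" for h :: "_ \<Rightarrow> real" using fin by (rule integrable_measure_pmf_finite)
  have "\<bar>measure_pmf.expectation Q (Fu n v \<sigma>0 u w True) - measure_pmf.expectation Q (Fu n v \<sigma>0 u w False)\<bar>
       \<le> measure_pmf.expectation Q (\<lambda>f. (if R f = - \<sigma>0 v then 1 else 0) + (if R f = - \<sigma>0 v - \<sigma>0 w then 1 else 0))"
  proof (rule expect_diff_bound[OF fin])
    fix f
    have "\<bar>Tf ((\<sigma>0 v + R f) + \<sigma>0 w) (\<sigma>0 u = 1) - Tf (\<sigma>0 v + R f) (\<sigma>0 u = 1)\<bar>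
        \<le> (if \<sigma>0 v + R f = 0 then 1 else 0) + (if \<sigma>0 v + R f = - \<sigma>0 w then 1 else 0)"
      by (rule Tf_diff[OF sw])
    moreover have "Fu n v \<sigma>0 u w True f = Tf ((\<sigma>0 v + R f) + \<sigma>0 w) (\<sigma>0 u = 1)"
      "Fu n v \<sigma>0 u w False f = Tf (\<sigma>0 v + R f) (\<sigma>0 u = 1)"
      unfolding Fu_def R_def by (simp_all add: algebra_simps)
    moreover have "(\<sigma>0 v + R f = 0) = (R f = - \<sigma>0 v)" "(\<sigma>0 v + R f = - \<sigma>0 w) = (R f = - \<sigma>0 v - \<sigma>0 w)"
      by auto
    ultimately show "\<bar>Fu n v \<sigma>0 u w True f - Fu n v \<sigma>0 u w False f\<bar>
        \<le> (if R f = - \<sigma>0 v then 1 else 0) + (if R f = - \<sigma>0 v - \<sigma>0 w then 1 else 0)"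
      by simp
  qed
  also have "\<dots> = measure_pmf.expectation Q (\<lambda>f. if R f = - \<sigma>0 v then 1 else 0)
           + measure_pmf.expectation Q (\<lambda>f. if R f = - \<sigma>0 v - \<sigma>0 w then 1 else 0)"
    by (rule Bochner_Integration.integral_add) (rule int)+
  finally show "\<bar>measure_pmf.expectation Q (Fu n v \<sigma>0 u w True) - measure_pmf.expectation Q (Fu n v \<sigma>0 u w False)\<bar>
         \<le> measure_pmf.expectation Q (\<lambda>f. if R f = - \<sigma>0 v then 1 else 0)
           + measure_pmf.expectation Q (\<lambda>f. if R f = - \<sigma>0 v - \<sigma>0 w then 1 else 0)" .
  have "\<bar>measure_pmf.expectation Q (Fu n v \<sigma>0 u w True) - measure_pmf.expectation Q (Fu n v \<sigma>0 u w False)\<bar>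
       \<le> measure_pmf.expectation Q (\<lambda>f. 1)"
    by (rule expect_diff_bound[OF fin]) (simp add: Fu_def Tf_diff1)
  then show "\<bar>measure_pmf.expectation Q (Fu n v \<sigma>0 u w True) - measure_pmf.expectation Q (Fu n v \<sigma>0 u w False)\<bar> \<le> 1"
    by simp
qed



lemma law_count:
  fixes p :: real
  assumes uV: "u \<in> vert n" "u \<noteq> v" and WV: "W' \<subseteq> vert n - {u, v}" and p: "0 \<le> p" "p \<le> 1"
  shows "map_pmf (\<lambda>f. card {z\<in>W'. f {u,z}}) (Pi_pmf (all_pairs n) False (Dc p v \<Gamma>)) = binomial_pmf (card W') p"
proof -
  define g where "g = (\<lambda>z. {u,z::nat})"
  define A where "A = g ` W'"
  have inj: "inj_on g W'" unfolding g_def inj_on_def using WV by (auto simp: doubleton_eq_iff)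
  have finW: "finite W'" using WV finite_subset[of W' "vert n"] by (auto simp: vert_def)
  have AJ: "A \<subseteq> all_pairs n" unfolding A_def g_def using WV uV by (auto simp: pair_in_all_pairs)
  have cardA: "card A = card W'" unfolding A_def using inj by (rule card_image)
  have finA: "finite A" unfolding A_def using finW by simp
  have c: "card {z\<in>W'. f {u,z}} = card {e\<in>A. f e}" for f
  proof -
    have "{e\<in>A. f e} = g ` {z\<in>W'. f {u,z}}" unfolding A_def g_def by auto
    moreover have "inj_on g {z\<in>W'. f {u,z}}" using inj by (rule inj_on_subset) auto
    ultimately show ?thesis by (simp add: card_image)
  qed
  have "binomial_pmf (card W') p = map_pmf (\<lambda>f. card {x\<in>A. f x}) (Pi_pmf A False (\<lambda>_. bernoulli_pmf p))"
    using finA cardA p by (intro binomial_pmf_altdef') auto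
  also have "Pi_pmf A False (\<lambda>_. bernoulli_pmf p) = Pi_pmf A False (Dc p v \<Gamma>)"
    using WV uV by (intro Pi_pmf_cong) (auto simp: A_def g_def Dc_def)
  also have "\<dots> = map_pmf (\<lambda>f x. if x \<in> A then f x else False) (Pi_pmf (all_pairs n) False (Dc p v \<Gamma>))"
    using finite_all_pairs AJ by (rule Pi_pmf_subset)
  also have "map_pmf (\<lambda>f. card {x\<in>A. f x}) \<dots> = map_pmf (\<lambda>f. card {e\<in>A. f e}) (Pi_pmf (all_pairs n) False (Dc p v \<Gamma>))"
    by (simp add: pmf.map_comp o_def cong: conj_cong)
  finally show ?thesis by (simp add: c)
qed

lemma R_prob:
  fixes p Mb :: real and t :: int
  assumes uV: "u \<in> vert n" "u \<noteq> v" and WV: "W \<subseteq> vert n - {u, v}" and sW: "\<forall>z\<in>W. \<sigma>0 z = 1 \<or> \<sigma>0 z = -1"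
    and p: "0 \<le> p" "p \<le> 1"
    and bnd: "\<And>j. pmf (binomial_pmf (card {z\<in>W. \<sigma>0 z = 1}) p) j \<le> Mb"
  shows "measure_pmf.expectation (Pi_pmf (all_pairs n) False (Dc p v \<Gamma>)) (\<lambda>f. if Rs W \<sigma>0 u f = t then 1 else 0) \<le> Mb"
proof -
  define Q where "Q = Pi_pmf (all_pairs n) False (Dc p v \<Gamma>)"
  define Wp where "Wp = {z\<in>W. \<sigma>0 z = 1}"
  define Wm where "Wm = {z\<in>W. \<sigma>0 z = -1}"
  define Bp where "Bp = (\<lambda>f::nat set \<Rightarrow> bool. card {z\<in>Wp. f {u,z}})"
  define Bm where "Bm = (\<lambda>f::nat set \<Rightarrow> bool. card {z\<in>Wm. f {u,z}})"
  define N where "N = card W"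
  have finW: "finite W" using WV finite_subset[of W "vert n"] by (auto simp: vert_def)
  have fin: "finite (set_pmf Q)" unfolding Q_def by (rule finite_set_Pi_bool[OF finite_all_pairs])
  have int: "integrable Q h" for h :: "_ \<Rightarrow> real" using fin by (rule integrable_measure_pmf_finite)
  have Mb0: "0 \<le> Mb" using bnd[of 0] pmf_nonneg[of "binomial_pmf (card {z\<in>W. \<sigma>0 z = 1}) p" 0] by linarith
  have Wsplit: "W = Wp \<union> Wm" "Wp \<inter> Wm = {}" using sW unfolding Wp_def Wm_def by auto
  have finWp: "finite Wp" "finite Wm" using finW unfolding Wp_def Wm_def by auto
  have R: "Rs W \<sigma>0 u f = int (Bp f) - int (Bm f)" for f
  proof -
    have "Rs W \<sigma>0 u f = (\<Sum>z\<in>Wp. if f {u,z} then \<sigma>0 z else 0) + (\<Sum>z\<in>Wm. if f {u,z} then \<sigma>0 z else 0)"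
      unfolding Rs_def using finWp Wsplit by (simp add: sum.union_disjoint)
    also have "(\<Sum>z\<in>Wp. if f {u,z} then \<sigma>0 z else 0) = (\<Sum>z\<in>Wp. if f {u,z} then 1 else 0)"
      unfolding Wp_def by (rule sum.cong) auto
    also have "\<dots> = int (Bp f)" unfolding Bp_def using finWp by (simp add: sum.If_cases Int_def)
    also have "(\<Sum>z\<in>Wm. if f {u,z} then \<sigma>0 z else 0) = (\<Sum>z\<in>Wm. if f {u,z} then -1 else 0)"
      unfolding Wm_def by (rule sum.cong) auto
    also have "\<dots> = - int (Bm f)" unfolding Bm_def using finWp by (simp add: sum.If_cases Int_def)
    finally show ?thesis by simp
  qed
  have BmN: "Bm f \<le> N" for f
  proof -
    have "Bm f \<le> card W" unfolding Bm_def Wm_def using finW by (intro card_mono) auto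
    then show ?thesis unfolding N_def .
  qed
  define ind where "ind = (\<lambda>P. if P then 1 else (0::real))"
  have decomp: "(if Rs W \<sigma>0 u f = t then 1 else 0) = (\<Sum>k\<in>{..N}. ind (Bm f = k) * ind (int (Bp f) = t + int k))" for f
  proof -
    have "(\<Sum>k\<in>{..N}. ind (Bm f = k) * ind (int (Bp f) = t + int k)) = (\<Sum>k\<in>{..N}. if k = Bm f then ind (int (Bp f) = t + int (Bm f)) else 0)"
      by (intro sum.cong) (auto simp: ind_def)
    also have "\<dots> = ind (int (Bp f) = t + int (Bm f))" using BmN[of f] by (simp add: sum.delta')
    finally show ?thesis using R[of f] by (auto simp: ind_def)
  qed
  have dm: "dep_on ((\<lambda>z. {u,z}) ` Wm) (\<lambda>f. ind (Bm f = k))" for k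
    unfolding dep_on_def Bm_def by (auto intro!: arg_cong[where f = ind] arg_cong[where f = card])
  have dp: "dep_on ((\<lambda>z. {u,z}) ` Wp) (\<lambda>f. ind (int (Bp f) = s))" for s
    unfolding dep_on_def Bp_def by (auto intro!: arg_cong[where f = ind] arg_cong[where f = card])
  have WmJ: "(\<lambda>z. {u,z}) ` Wm \<subseteq> all_pairs n" using WV uV unfolding Wm_def by (auto simp: pair_in_all_pairs)
  have disj: "(\<lambda>z. {u,z}) ` Wm \<inter> (\<lambda>z. {u,z}) ` Wp = {}"
    using Wsplit WV by (auto simp: doubleton_eq_iff)
  have Ep: "measure_pmf.expectation Q (\<lambda>f. ind (int (Bp f) = s)) \<le> Mb" for s
  proof -
    have "measure_pmf.expectation Q (\<lambda>f. ind (int (Bp f) = s))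
        = measure_pmf.expectation (map_pmf Bp Q) (\<lambda>j. ind (int j = s))" by simp
    also have "map_pmf Bp Q = binomial_pmf (card Wp) p"
      unfolding Q_def Bp_def using uV p WV by (intro law_count) (auto simp: Wp_def)
    also have "measure_pmf.expectation (binomial_pmf (card Wp) p) (\<lambda>j. ind (int j = s)) \<le> Mb"
    proof (cases "s \<ge> 0")
      case True
      have "(\<lambda>j. ind (int j = s)) = indicator {nat s}" using True by (intro ext) (auto simp: ind_def indicator_def)
      then have "measure_pmf.expectation (binomial_pmf (card Wp) p) (\<lambda>j. ind (int j = s)) = pmf (binomial_pmf (card Wp) p) (nat s)"
        by (simp add: measure_pmf_single)
      then show ?thesis using bnd[of "nat s"] by (simp add: Wp_def)
    next
      case False
      then have "(\<lambda>j. ind (int j = s)) = (\<lambda>_. 0)" by (auto simp: ind_def)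
      then show ?thesis using Mb0 by simp
    qed
    finally show ?thesis .
  qed
  have "measure_pmf.expectation Q (\<lambda>f. if Rs W \<sigma>0 u f = t then 1 else 0)
      = measure_pmf.expectation Q (\<lambda>f. \<Sum>k\<in>{..N}. ind (Bm f = k) * ind (int (Bp f) = t + int k))"
    by (simp only: decomp)
  also have "\<dots> = (\<Sum>k\<in>{..N}. measure_pmf.expectation Q (\<lambda>f. ind (Bm f = k) * ind (int (Bp f) = t + int k)))"
    by (rule Bochner_Integration.integral_sum) (rule int)
  also have "\<dots> = (\<Sum>k\<in>{..N}. measure_pmf.expectation Q (\<lambda>f. ind (Bm f = k)) * measure_pmf.expectation Q (\<lambda>f. ind (int (Bp f) = t + int k)))"
    unfolding Q_def by (intro sum.cong refl indep2[OF finite_all_pairs WmJ disj dm dp])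
  also have "\<dots> \<le> (\<Sum>k\<in>{..N}. measure_pmf.expectation Q (\<lambda>f. ind (Bm f = k)) * Mb)"
  proof (intro sum_mono mult_left_mono Ep)
    fix k show "0 \<le> measure_pmf.expectation Q (\<lambda>f. ind (Bm f = k))"
      by (intro Bochner_Integration.integral_nonneg) (auto simp: ind_def)
  qed
  also have "\<dots> = measure_pmf.expectation Q (\<lambda>f. \<Sum>k\<in>{..N}. ind (Bm f = k)) * Mb"
    by (simp add: sum_distrib_right[symmetric] Bochner_Integration.integral_sum[OF int])
  also have "(\<lambda>f. \<Sum>k\<in>{..N}. ind (Bm f = k)) = (\<lambda>f. 1)"
  proof
    fix f
    have "(\<Sum>k\<in>{..N}. ind (Bm f = k)) = (\<Sum>k\<in>{..N}. if k = Bm f then 1 else 0)"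
      by (intro sum.cong) (auto simp: ind_def)
    also have "\<dots> = 1" using BmN[of f] by (simp add: sum.delta')
    finally show "(\<Sum>k\<in>{..N}. ind (Bm f = k)) = 1" .
  qed
  finally show ?thesis unfolding Q_def by simp
qed



lemma arithA:
  fixes n p g \<gamma> :: real
  assumes n: "n > 0" and p: "0 < p" "p \<le> 1" and A: "n * (1 - p) \<le> 6"
    and g: "0 \<le> g" "g \<le> (11/10) * (n * p)"
  shows "g + g\<^sup>2 * (p * (1 - p)) \<le> (max (96 * \<gamma>\<^sup>2) 8 + 1) * (n * p)"
proof -
  have g2: "g\<^sup>2 \<le> ((11/10) * (n * p))\<^sup>2" using g by (intro power_mono) auto
  have "g\<^sup>2 * (p * (1 - p)) \<le> ((11/10) * (n * p))\<^sup>2 * (p * (1 - p))"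
    using g2 p by (intro mult_right_mono) auto
  also have "\<dots> = (121/100) * (n * p) * (p * p) * (n * (1 - p))" by (simp add: power2_eq_square algebra_simps)
  also have "\<dots> \<le> (121/100) * (n * p) * 1 * 6"
    using n p A by (intro mult_mono) (auto simp: mult_le_one)
  finally have "g\<^sup>2 * (p * (1 - p)) \<le> (121/100) * (n * p) * 1 * 6" .
  moreover have "(9::real) \<le> max (96 * \<gamma>\<^sup>2) 8 + 1" by simp
  moreover have "0 \<le> n * p" using n p by simp
  ultimately have "g + g\<^sup>2 * (p * (1 - p)) \<le> 9 * (n * p)" using g by linarith
  also have "\<dots> \<le> (max (96 * \<gamma>\<^sup>2) 8 + 1) * (n * p)"
    using n p by (intro mult_right_mono) auto
  finally show ?thesis .
qed

lemma arithB:
  fixes n p g a \<gamma> Mb :: real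
  assumes n: "n > 0" and p: "0 < p" "p < 1" and B: "6 \<le> n * (1 - p)"
    and g: "0 \<le> g" "g \<le> (11/10) * (n * p)" and a: "0 \<le> a" "a\<^sup>2 \<le> 1/6" and ga: "0 \<le> \<gamma>"
    and Mb: "Mb = (a + \<gamma> / sqrt ((49/100) * n * p * (1 - p))) / sqrt ((49/100) * n * p * (1 - p))"
  shows "g + g\<^sup>2 * (p * (1 - p) * (2 * Mb)\<^sup>2) \<le> (max (96 * \<gamma>\<^sup>2) 8 + 1) * (n * p)"
proof -
  define V where "V = (49/100) * n * p * (1 - p)"
  define s where "s = sqrt V"
  have V0: "V > 0" unfolding V_def using n p by simp
  have s0: "s > 0" and s2: "s\<^sup>2 = V" unfolding s_def using V0 by auto
  have Mb': "Mb = (a + \<gamma> / s) / s" unfolding Mb s_def V_def ..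
  have "(2 * Mb)\<^sup>2 = (2 * (a + \<gamma> / s))\<^sup>2 / s\<^sup>2" unfolding Mb' by (simp add: power_divide)
  also have "\<dots> = 4 * (a + \<gamma> / s)\<^sup>2 / V" unfolding s2 power_mult_distrib by simp
  also have "\<dots> \<le> 4 * (2 * a\<^sup>2 + 2 * (\<gamma> / s)\<^sup>2) / V"
  proof -
    have sq: "(x + y)\<^sup>2 \<le> 2 * x\<^sup>2 + 2 * y\<^sup>2" for x y :: real
    proof -
      have "0 \<le> (x - y)\<^sup>2" by simp
      then show ?thesis by (simp add: power2_eq_square algebra_simps)
    qed
    have "(a + \<gamma> / s)\<^sup>2 \<le> 2 * a\<^sup>2 + 2 * (\<gamma> / s)\<^sup>2" by (rule sq)
    then show ?thesis using V0 by (intro divide_right_mono) auto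
  qed
  also have "\<dots> = 8 * (a\<^sup>2 + \<gamma>\<^sup>2 / V) / V" using s2 by (simp add: power_divide algebra_simps)
  finally have M2: "(2 * Mb)\<^sup>2 \<le> 8 * (a\<^sup>2 + \<gamma>\<^sup>2 / V) / V" .
  have pq: "p * (1 - p) > 0" using p by simp
  have "p * (1 - p) * (2 * Mb)\<^sup>2 \<le> p * (1 - p) * (8 * (a\<^sup>2 + \<gamma>\<^sup>2 / V) / V)"
    using M2 pq by (intro mult_left_mono) auto
  also have "\<dots> = 8 * a\<^sup>2 / ((49/100) * n) + 8 * \<gamma>\<^sup>2 / ((49/100) * n * V)"
  proof -
    have qV: "p * (1 - p) = V * 100 / (49 * n)" unfolding V_def using n by (simp add: field_simps)
    show ?thesis unfolding qV using n V0 by (simp add: field_simps)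
  qed
  finally have CB: "p * (1 - p) * (2 * Mb)\<^sup>2 \<le> 8 * a\<^sup>2 / ((49/100) * n) + 8 * \<gamma>\<^sup>2 / ((49/100) * n * V)" .
  have g2: "g\<^sup>2 \<le> (121/100) * (n * p)\<^sup>2"
  proof -
    have "g\<^sup>2 \<le> ((11/10) * (n * p))\<^sup>2" using g by (intro power_mono) auto
    also have "((11/10) * (n * p))\<^sup>2 = (121/100) * (n * p)\<^sup>2" by (simp add: power2_eq_square)
    finally show ?thesis .
  qed
  have t1: "(121/100) * (n * p)\<^sup>2 * (8 * a\<^sup>2 / ((49/100) * n)) \<le> (33/10) * (n * p)"
  proof -
    have "(121/100) * (n * p)\<^sup>2 * (8 * a\<^sup>2 / ((49/100) * n)) = ((121/100) * 8 / (49/100)) * a\<^sup>2 * p * (n * p)"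
      using n by (simp add: power2_eq_square field_simps)
    also have "\<dots> \<le> ((121/100) * 8 / (49/100)) * (1/6) * 1 * (n * p)"
      using a p n by (intro mult_right_mono mult_mono) auto
    also have "\<dots> \<le> (33/10) * (n * p)" using n p by (intro mult_right_mono) auto
    finally show ?thesis .
  qed
  have t2: "(121/100) * (n * p)\<^sup>2 * (8 * \<gamma>\<^sup>2 / ((49/100) * n * V)) \<le> 7 * \<gamma>\<^sup>2 * (n * p)"
  proof -
    have "(121/100) * (n * p)\<^sup>2 * (8 * \<gamma>\<^sup>2 / ((49/100) * n * V)) = ((121/100) * 8 / ((49/100) * (49/100))) * \<gamma>\<^sup>2 * (n * p) / (n * (1 - p))"
      unfolding V_def using n p by (simp add: power2_eq_square field_simps)
    also have "\<dots> \<le> ((121/100) * 8 / ((49/100) * (49/100))) * \<gamma>\<^sup>2 * (n * p) / 6"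
      using B n p ga by (intro divide_left_mono) auto
    also have "\<dots> \<le> 7 * \<gamma>\<^sup>2 * (n * p)" using n p by simp
    finally show ?thesis .
  qed
  have "g\<^sup>2 * (p * (1 - p) * (2 * Mb)\<^sup>2) \<le> (121/100) * (n * p)\<^sup>2 * (8 * a\<^sup>2 / ((49/100) * n) + 8 * \<gamma>\<^sup>2 / ((49/100) * n * V))"
    using g2 CB pq by (intro mult_mono) auto
  also have "\<dots> \<le> (33/10) * (n * p) + 7 * \<gamma>\<^sup>2 * (n * p)" using t1 t2 by (simp add: distrib_left)
  finally have main: "g\<^sup>2 * (p * (1 - p) * (2 * Mb)\<^sup>2) \<le> (33/10) * (n * p) + 7 * \<gamma>\<^sup>2 * (n * p)" .
  have np: "0 < n * p" using n p by simp
  have "(44/10) + 7 * \<gamma>\<^sup>2 \<le> max (96 * \<gamma>\<^sup>2) 8 + 1"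
  proof (cases "\<gamma>\<^sup>2 \<le> 1/2")
    case True then show ?thesis by (simp add: max_def)
  next
    case False then show ?thesis by (simp add: max_def)
  qed
  then have "((44/10) + 7 * \<gamma>\<^sup>2) * (n * p) \<le> (max (96 * \<gamma>\<^sup>2) 8 + 1) * (n * p)"
    using np by (intro mult_right_mono) auto
  then show ?thesis using main g by (simp add: algebra_simps)
qed



lemma phi_ge: "real_of_int (phi n x) \<ge> x"
proof -
  define k0 where "k0 = (if \<lceil>x\<rceil> mod 2 = int n mod 2 then \<lceil>x\<rceil> else \<lceil>x\<rceil> + 1)"
  have P: "real_of_int k0 \<ge> x \<and> k0 mod 2 = int n mod 2"
  proof
    have c: "x \<le> real_of_int \<lceil>x\<rceil>" by (rule le_of_int_ceiling)
    show "real_of_int k0 \<ge> x"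
    proof (cases "\<lceil>x\<rceil> mod 2 = int n mod 2")
      case True then show ?thesis unfolding k0_def using c by simp
    next
      case False then show ?thesis unfolding k0_def using c by simp linarith
    qed
    show "k0 mod 2 = int n mod 2" unfolding k0_def by presburger
  qed
  have "phi n x = k0"
    unfolding phi_def
  proof (rule Least_equality)
    show "x \<le> real_of_int k0 \<and> k0 mod 2 = int n mod 2" using P by simp
    fix y assume y: "x \<le> real_of_int y \<and> y mod 2 = int n mod 2"
    then have "\<lceil>x\<rceil> \<le> y" by (simp add: ceiling_le_iff)
    moreover have ym: "y mod 2 = int n mod 2" using y by simp
    ultimately show "k0 \<le> y" unfolding k0_def by presburger
  qed
  then show ?thesis using P by simp
qed

lemma card_plus:
  fixes \<sigma>0 :: "nat \<Rightarrow> int"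
  assumes s: "\<forall>u\<in>vert n. \<sigma>0 u \<in> {-1, 1}" and S: "(\<Sum>u\<in>vert n. \<sigma>0 u) \<ge> 0"
  shows "real (card {z\<in>vert n. \<sigma>0 z = 1}) \<ge> real n / 2"
proof -
  define Pl where "Pl = {z\<in>vert n. \<sigma>0 z = 1}"
  define Mi where "Mi = {z\<in>vert n. \<sigma>0 z = -1}"
  have fin: "finite (vert n)" by (simp add: vert_def)
  have split: "vert n = Pl \<union> Mi" "Pl \<inter> Mi = {}" using s unfolding Pl_def Mi_def by auto
  have finPM: "finite Pl" "finite Mi" using fin unfolding Pl_def Mi_def by auto
  have "(\<Sum>u\<in>vert n. \<sigma>0 u) = (\<Sum>u\<in>Pl. \<sigma>0 u) + (\<Sum>u\<in>Mi. \<sigma>0 u)"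
    by (subst split(1)) (rule sum.union_disjoint[OF finPM split(2)])
  also have "(\<Sum>u\<in>Pl. \<sigma>0 u) = int (card Pl)" unfolding Pl_def by simp
  also have "(\<Sum>u\<in>Mi. \<sigma>0 u) = - int (card Mi)" unfolding Mi_def by simp
  finally have "int (card Pl) \<ge> int (card Mi)" using S by simp
  moreover have "card Pl + card Mi = n"
  proof -
    have "card Pl + card Mi = card (vert n)" by (simp only: split(1) card_Un_disjoint[OF finPM split(2)])
    also have "card (vert n) = n" by (simp add: vert_def)
    finally show ?thesis .
  qed
  ultimately show ?thesis unfolding Pl_def[symmetric] by linarith
qed

lemma powr_bound:
  fixes d :: real
  assumes "d \<ge> 1000"
  shows "d powr (2/3) \<le> d / 10"
proof -
  have d0: "d > 0" using assms by simp
  have "(1000::real) powr (1/3) = 10"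
  proof -
    have "(1000::real) = 10 powr 3" by (simp add: powr_realpow)
    then have "(1000::real) powr (1/3) = (10 powr 3) powr (1/3)" by simp
    also have "\<dots> = 10" by (simp add: powr_powr)
    finally show ?thesis .
  qed
  moreover have "(1000::real) powr (1/3) \<le> d powr (1/3)" using assms by (intro powr_mono2) auto
  ultimately have t: "10 \<le> d powr (1/3)" by simp
  have "d = d powr (2/3) * d powr (1/3)" using d0 by (simp add: powr_add[symmetric])
  then have "d powr (2/3) * 10 \<le> d" using t d0 by (metis mult_left_mono powr_ge_zero)
  then show ?thesis by simp
qed

lemma pmf_unif:
  fixes \<gamma> :: real
  assumes gamma: "\<And>(k::nat) (q::real). k > 0 \<Longrightarrow> 0 < q \<Longrightarrow> q < 1 \<Longrightarrow>
     (let Y = binomial_pmf k q;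
          V = measure_pmf.variance Y real;
          m = measure_pmf.expectation Y real
      in (SUP i::nat. \<bar>sqrt V * pmf Y i - 1 / sqrt (2 * pi) * exp (- (real i - m)\<^sup>2 / (2 * V))\<bar>)
           < \<gamma> / sqrt V)"
    and m0: "0 < m0" "m0 \<le> real m" and p: "0 < p" "p < 1"
  shows "pmf (binomial_pmf m p) j \<le> (1 / sqrt (2 * pi) + \<gamma> / sqrt (m0 * p * (1 - p))) / sqrt (m0 * p * (1 - p))"
proof -
  have m: "m > 0" using m0 by simp
  define V where "V = real m * p * (1 - p)"
  define V0 where "V0 = m0 * p * (1 - p)"
  have V00: "V0 > 0" unfolding V0_def using m0 p by simp
  have VV: "V0 \<le> V" unfolding V0_def V_def using m0 p by (intro mult_right_mono) auto
  have s: "0 < sqrt V0" "sqrt V0 \<le> sqrt V" using V00 VV by auto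
  have g0: "\<gamma> > 0" using pmf_bound_gamma(2)[OF gamma m p] .
  have "sqrt V * pmf (binomial_pmf m p) j < 1 / sqrt (2 * pi) + \<gamma> / sqrt V"
    unfolding V_def by (rule pmf_bound_gamma(1)[OF gamma m p])
  then have "pmf (binomial_pmf m p) j \<le> (1 / sqrt (2 * pi) + \<gamma> / sqrt V) / sqrt V"
    using s by (simp add: field_simps)
  also have "\<dots> \<le> (1 / sqrt (2 * pi) + \<gamma> / sqrt V0) / sqrt V0"
  proof (rule frac_le)
    show "0 \<le> 1 / sqrt (2 * pi) + \<gamma> / sqrt V0" using g0 s by simp
    show "1 / sqrt (2 * pi) + \<gamma> / sqrt V \<le> 1 / sqrt (2 * pi) + \<gamma> / sqrt V0"
      using g0 s by (simp add: divide_left_mono)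
  qed (use s in auto)
  finally show ?thesis unfolding V0_def .
qed



lemma main_bound:
  fixes \<gamma> :: real and \<sigma>0 :: "nat \<Rightarrow> int" and \<beta> \<epsilon> p :: real
  assumes gamma: "\<And>(k::nat) (q::real). k > 0 \<Longrightarrow> 0 < q \<Longrightarrow> q < 1 \<Longrightarrow>
     (let Y = binomial_pmf k q;
          V = measure_pmf.variance Y real;
          m = measure_pmf.expectation Y real
      in (SUP i::nat. \<bar>sqrt V * pmf Y i - 1 / sqrt (2 * pi) * exp (- (real i - m)\<^sup>2 / (2 * V))\<bar>)
           < \<gamma> / sqrt V)"
    and \<beta>: "10 \<le> \<beta>" and eps: "0 < \<epsilon>" "\<epsilon> \<le> 1" and p: "0 \<le> p" "p \<le> 1"
    and dge: "max (1 / (sqrt (2 * pi) * \<epsilon> / 20)\<^sup>2) (\<beta>\<^sup>2) * sqrt (real n) \<le> real n * p"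
    and v: "v \<in> vert n" and sig: "\<forall>u\<in>vert n. \<sigma>0 u \<in> {-1, 1}"
    and sum: "(\<Sum>u\<in>vert n. \<sigma>0 u) = phi n (2 * (sqrt (2 * pi) * \<epsilon> / 20) * sqrt (real n))"
    and G: "\<Gamma> \<subseteq> vert n - {v}" and dev: "\<bar>real (card \<Gamma>) - real n * p\<bar> \<le> (real n * p) powr (2/3)"
    and ne: "set_pmf (Gnp n p) \<inter> {E. nbhd E v = \<Gamma>} \<noteq> {}"
  shows "measure_pmf.variance (cond_pmf (Gnp n p) {E. nbhd E v = \<Gamma>}) (\<lambda>E. real (X2 E \<sigma>0 v))
          \<le> (max (96 * \<gamma>\<^sup>2) 8 + 1) * (real n * p)"
proof -
  define d where "d = real n * p"
  define c where "c = sqrt (2 * pi) * \<epsilon> / 20"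
  have c0: "c > 0" unfolding c_def using eps by simp
  have b2: "100 \<le> \<beta>\<^sup>2" using power_mono[OF \<beta>, of 2] by simp
  have lam: "100 \<le> max (1 / c\<^sup>2) (\<beta>\<^sup>2)" using b2 by simp
  have n1: "n \<ge> 1" using v by (simp add: vert_def)
  have sn: "sqrt (real n) > 0" using n1 by simp
  have d100: "100 * sqrt (real n) \<le> d"
  proof -
    have "100 * sqrt (real n) \<le> max (1 / c\<^sup>2) (\<beta>\<^sup>2) * sqrt (real n)"
      using lam sn by (intro mult_right_mono) auto
    then show ?thesis using dge unfolding d_def c_def by linarith
  qed
  have dn: "d \<le> real n" unfolding d_def using p by (simp add: mult_left_le)
  have sn100: "100 \<le> sqrt (real n)"
  proof -
    have e: "sqrt (real n) * sqrt (real n) = real n" by simp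
    have "100 * sqrt (real n) \<le> sqrt (real n) * sqrt (real n)" using d100 dn e by linarith
    then show ?thesis using sn by (simp only: mult_le_cancel_right_pos)
  qed
  have nbig: "10000 \<le> real n"
  proof -
    have "100 * 100 \<le> sqrt (real n) * sqrt (real n)" using sn100 by (intro mult_mono) auto
    then show ?thesis by simp
  qed
  have dbig: "10000 \<le> d" using d100 sn100 by linarith
  have p0: "0 < p" using dbig unfolding d_def using p by (cases "p = 0") auto
  have gle: "real (card \<Gamma>) \<le> (11/10) * d"
  proof -
    have "d powr (2/3) \<le> d / 10" using dbig by (intro powr_bound) simp
    then show ?thesis using dev unfolding d_def by linarith
  qed
  have g0: "\<gamma> > 0" using pmf_bound_gamma(2)[OF gamma, of 1 "1/2"] by simp
  define Q where "Q = Pi_pmf (all_pairs n) False (Dc p v \<Gamma>)"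
  have finQ: "finite (set_pmf Q)" unfolding Q_def by (rule finite_set_Pi_bool[OF finite_all_pairs])
  have intQ: "integrable Q h" for h :: "_ \<Rightarrow> real" using finQ by (rule integrable_measure_pmf_finite)
  have finG: "finite \<Gamma>" using G finite_subset[of \<Gamma> "vert n"] by (auto simp: vert_def)
  define cov where "cov = (\<lambda>u w. measure_pmf.expectation Q (\<lambda>f. Iu n \<sigma>0 u f * Iu n \<sigma>0 w f)
             - measure_pmf.expectation Q (Iu n \<sigma>0 u) * measure_pmf.expectation Q (Iu n \<sigma>0 w))"
  have var_eq: "measure_pmf.variance (cond_pmf (Gnp n p) {E. nbhd E v = \<Gamma>}) (\<lambda>E. real (X2 E \<sigma>0 v))
      = (\<Sum>u\<in>\<Gamma>. \<Sum>w\<in>\<Gamma>. cov u w)"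
  proof -
    have "measure_pmf.variance (cond_pmf (Gnp n p) {E. nbhd E v = \<Gamma>}) (\<lambda>E. real (X2 E \<sigma>0 v))
        = measure_pmf.variance (map_pmf (graph n) Q) (\<lambda>E. real (X2 E \<sigma>0 v))"
      unfolding Q_def by (simp only: cond_eq[OF v G p ne])
    also have "\<dots> = measure_pmf.variance Q (\<lambda>f. real (X2 (graph n f) \<sigma>0 v))" by simp
    also have "\<dots> = measure_pmf.variance Q (\<lambda>f. \<Sum>u\<in>\<Gamma>. Iu n \<sigma>0 u f)"
      by (rule variance_cong_supp) (use X2_supp[OF v G] in \<open>simp add: Q_def\<close>)
    also have "\<dots> = (\<Sum>u\<in>\<Gamma>. \<Sum>w\<in>\<Gamma>. cov u w)" unfolding cov_def by (rule var_sum[OF finQ finG])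
    finally show ?thesis .
  qed
  have sum0: "(\<Sum>u\<in>vert n. \<sigma>0 u) \<ge> 0"
  proof -
    have "0 \<le> 2 * c * sqrt (real n)" using c0 by simp
    also have "\<dots> \<le> real_of_int (phi n (2 * c * sqrt (real n)))" by (rule phi_ge)
    finally show ?thesis using sum unfolding c_def by simp
  qed
  have cardPl: "real (card {z\<in>vert n. \<sigma>0 z = 1}) \<ge> real n / 2" by (rule card_plus[OF sig sum0])
  have cardW: "real (card {z\<in>vert n - {u,v,w}. \<sigma>0 z = 1}) \<ge> 49/100 * real n" for u w
  proof -
    have eq: "{z\<in>vert n - {u,v,w}. \<sigma>0 z = 1} = {z\<in>vert n. \<sigma>0 z = 1} - {u,v,w}" by auto
    have c3: "card {u,v,w} \<le> 3" by (auto simp: card_insert_if)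
    have "card {z\<in>vert n. \<sigma>0 z = 1} - card {u,v,w} \<le> card ({z\<in>vert n. \<sigma>0 z = 1} - {u,v,w})"
      by (rule diff_card_le_card_Diff) simp
    then have "real (card {z\<in>vert n. \<sigma>0 z = 1}) - 3 \<le> real (card {z\<in>vert n - {u,v,w}. \<sigma>0 z = 1})"
      unfolding eq using c3 by linarith
    then show ?thesis using cardPl nbig by linarith
  qed
  define a where "a = 1 / sqrt (2 * pi)"
  define Mb where "Mb = (a + \<gamma> / sqrt (49/100 * real n * p * (1 - p))) / sqrt (49/100 * real n * p * (1 - p))"
  define K where "K = (if real n * (1 - p) \<le> 6 then 1 else 2 * Mb)"
  define CB where "CB = p * (1 - p) * K * K"
  have K0: "0 \<le> K"
  proof (cases "real n * (1 - p) \<le> 6")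
    case False
    then have "p < 1" using p by (cases "p = 1") auto
    then have "0 < 49/100 * real n * p * (1 - p)" using p0 n1 by simp
    then show ?thesis using False g0 unfolding K_def Mb_def a_def by simp
  qed (simp add: K_def)
  have CB0: "0 \<le> CB" unfolding CB_def using K0 p by simp
  have Delta: "\<bar>measure_pmf.expectation Q (Fu n v \<sigma>0 u w True) - measure_pmf.expectation Q (Fu n v \<sigma>0 u w False)\<bar> \<le> K"
    if u: "u \<in> \<Gamma>" and w: "w \<in> \<Gamma>" and uw: "u \<noteq> w" for u w
  proof (cases "real n * (1 - p) \<le> 6")
    case True
    then show ?thesis unfolding K_def Q_def using delta_bound(2)[OF v G u w] sig w G by auto
  next
    case False
    then have p1: "p < 1" using p by (cases "p = 1") auto
    have uV: "u \<in> vert n" "u \<noteq> v" and wV: "w \<in> vert n" using u w G by auto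
    have sw: "\<sigma>0 w = 1 \<or> \<sigma>0 w = -1" using sig wV by auto
    have WV: "vert n - {u,v,w} \<subseteq> vert n - {u,v}" by auto
    have sW: "\<forall>z\<in>vert n - {u,v,w}. \<sigma>0 z = 1 \<or> \<sigma>0 z = -1" using sig by auto
    have bnd: "pmf (binomial_pmf (card {z\<in>vert n - {u,v,w}. \<sigma>0 z = 1}) p) j \<le> Mb" for j
      unfolding Mb_def a_def using nbig p0 p1 cardW[of u w]
      by (intro pmf_unif[OF gamma]) auto
    have "\<bar>measure_pmf.expectation Q (Fu n v \<sigma>0 u w True) - measure_pmf.expectation Q (Fu n v \<sigma>0 u w False)\<bar>
        \<le> Mb + Mb"
    proof -
      have r1: "measure_pmf.expectation Q (\<lambda>f. if Rs (vert n - {u,v,w}) \<sigma>0 u f = - \<sigma>0 v then 1 else 0) \<le> Mb"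
        unfolding Q_def by (rule R_prob[OF uV WV sW p bnd])
      have r2: "measure_pmf.expectation Q (\<lambda>f. if Rs (vert n - {u,v,w}) \<sigma>0 u f = - \<sigma>0 v - \<sigma>0 w then 1 else 0) \<le> Mb"
        unfolding Q_def by (rule R_prob[OF uV WV sW p bnd])
      show ?thesis using delta_bound(1)[where ?\<sigma>0.0 = \<sigma>0 and p = p, OF v G u w sw] r1 r2 unfolding Q_def by linarith
    qed
    then show ?thesis unfolding K_def using False by simp
  qed
  have covb: "cov u w \<le> (if u = w then 1 else 0) + CB" if u: "u \<in> \<Gamma>" and w: "w \<in> \<Gamma>" for u w
  proof (cases "u = w")
    case True
    have I01: "0 \<le> Iu n \<sigma>0 u f" "Iu n \<sigma>0 u f \<le> 1" for f by (auto simp: Iu_def)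
    have "measure_pmf.expectation Q (\<lambda>f. Iu n \<sigma>0 u f * Iu n \<sigma>0 u f) \<le> measure_pmf.expectation Q (\<lambda>f. 1)"
      using I01 by (intro integral_mono intQ) (simp add: mult_le_one)
    moreover have "0 \<le> measure_pmf.expectation Q (Iu n \<sigma>0 u) * measure_pmf.expectation Q (Iu n \<sigma>0 u)" by simp
    moreover have "measure_pmf.expectation Q (\<lambda>f. 1) = (1::real)" by simp
    ultimately have "cov u u \<le> 1" unfolding cov_def by linarith
    then show ?thesis using True CB0 by simp
  next
    case False
    define D1 where "D1 = measure_pmf.expectation Q (Fu n v \<sigma>0 u w True) - measure_pmf.expectation Q (Fu n v \<sigma>0 u w False)"
    define D2 where "D2 = measure_pmf.expectation Q (Fu n v \<sigma>0 w u True) - measure_pmf.expectation Q (Fu n v \<sigma>0 w u False)"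
    have "cov u w = p * (1 - p) * D1 * D2"
      unfolding cov_def D1_def D2_def Q_def by (rule cov_off[OF v G p u w False])
    also have "\<dots> \<le> p * (1 - p) * (\<bar>D1\<bar> * \<bar>D2\<bar>)"
      using p by (simp add: mult.assoc abs_mult[symmetric] mult_left_mono)
    also have "\<dots> \<le> p * (1 - p) * (K * K)"
      using Delta[OF u w False] Delta[OF w u False[symmetric]] p unfolding D1_def D2_def
      by (intro mult_left_mono mult_mono) auto
    finally show ?thesis using False unfolding CB_def by (simp add: mult.assoc)
  qed
  have "(\<Sum>u\<in>\<Gamma>. \<Sum>w\<in>\<Gamma>. cov u w) \<le> (\<Sum>u\<in>\<Gamma>. \<Sum>w\<in>\<Gamma>. (if u = w then 1 else 0) + CB)"
    using covb by (intro sum_mono) auto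
  also have "\<dots> = real (card \<Gamma>) + (real (card \<Gamma>))\<^sup>2 * CB"
    using finG by (simp add: sum.distrib power2_eq_square algebra_simps)
  also have "\<dots> \<le> (max (96 * \<gamma>\<^sup>2) 8 + 1) * d"
  proof (cases "real n * (1 - p) \<le> 6")
    case True
    then have "CB = p * (1 - p)" unfolding CB_def K_def by simp
    then show ?thesis unfolding d_def using arithA[of "real n" p "real (card \<Gamma>)" \<gamma>] n1 p0 p True gle
      unfolding d_def by simp
  next
    case False
    then have p1: "p < 1" using p by (cases "p = 1") auto
    have "CB = p * (1 - p) * (2 * Mb)\<^sup>2" unfolding CB_def K_def using False by (simp add: power2_eq_square)
    moreover have "a\<^sup>2 \<le> 1/6"
    proof -
      have "a\<^sup>2 = 1 / (2 * pi)" unfolding a_def by (simp add: power_divide)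
      also have "\<dots> \<le> 1 / (2 * 3)" using pi_gt3 by (intro divide_left_mono) auto
      finally show ?thesis by simp
    qed
    ultimately show ?thesis unfolding d_def
      using arithB[of "real n" p "real (card \<Gamma>)" a \<gamma> Mb] n1 p0 p1 False gle g0
      unfolding d_def Mb_def a_def by simp
  qed
  finally show ?thesis using var_eq unfolding d_def by simp
qed


theorem lemma3p6:
  fixes \<gamma> :: real
  assumes gamma: "\<And>(k::nat) (q::real). k > 0 \<Longrightarrow> 0 < q \<Longrightarrow> q < 1 \<Longrightarrow>
     (let Y = binomial_pmf k q;
          V = measure_pmf.variance Y real;
          m = measure_pmf.expectation Y real
      in (SUP i::nat. \<bar>sqrt V * pmf Y i - 1 / sqrt (2 * pi) * exp (- (real i - m)\<^sup>2 / (2 * V))\<bar>)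
           < \<gamma> / sqrt V)"
  shows "\<exists>\<beta>0::real. \<forall>\<beta>\<ge>\<beta>0. \<forall>(\<epsilon>::real) (n::nat) (p::real) (v::nat) (\<sigma>0::nat \<Rightarrow> int) (\<Gamma>::nat set).
     let c = sqrt (2 * pi) * \<epsilon> / 20;
         lam = max (1 / c\<^sup>2) (\<beta>\<^sup>2);
         d = real n * p
     in 0 < \<epsilon> \<longrightarrow> \<epsilon> \<le> 1 \<longrightarrow> 0 \<le> p \<longrightarrow> p \<le> 1 \<longrightarrow>
        d \<ge> lam * sqrt (real n) \<longrightarrow>
        v \<in> vert n \<longrightarrow>
        (\<forall>u\<in>vert n. \<sigma>0 u \<in> {-1, 1}) \<longrightarrow>
        (\<Sum>u\<in>vert n. \<sigma>0 u) = phi n (2 * c * sqrt (real n)) \<longrightarrow>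
        \<Gamma> \<subseteq> vert n - {v} \<longrightarrow>
        \<bar>real (card \<Gamma>) - d\<bar> \<le> d powr (2/3) \<longrightarrow>
        set_pmf (Gnp n p) \<inter> {E. nbhd E v = \<Gamma>} \<noteq> {} \<longrightarrow>
        measure_pmf.variance (cond_pmf (Gnp n p) {E. nbhd E v = \<Gamma>}) (\<lambda>E. real (X2 E \<sigma>0 v))
          \<le> (max (96 * \<gamma>\<^sup>2) 8 + 1) * d"
    by (intro exI[of _ "10::real"] allI impI, unfold Let_def, intro impI, rule main_bound[OF gamma], assumption+)

end
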